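(* Let $\rho$ be a positive semidefinite matrix on $\mathbb{C}^M\otimes\mathbb{C}^N$ of rank $r$, with spectral-type decomposition $\rho=\sum_{l=1}^r|\Psi_l\rangle\langle\Psi_l|$ ($|\Psi_l\rangle=\sqrt{\lambda_l}|\psi_l\rangle$, $\lambda_l>0$ the eigenvalues, $|\psi_l\rangle$ orthonormal eigenvectors), and let $\rho=\sum_{k=1}^K|\Phi_k\rangle\langle\Phi_k|$ be another decomposition into $K\ge r$ rank-one terms. Let $w_{mn}\in\mathbb{C}^r$ and $w'_{mn}\in\mathbb{C}^K$ ($m=1,\dots,M$, $n=1,\dots,N$) be the corresponding Gram vectors, $w_{mn}^l=\langle\Psi_l|e_m\otimes f_n\rangle$, $w'^{\,k}_{mn}=\langle\Phi_k|e_m\otimes f_n\rangle$. Suppose $v_1,\dots,v_N\in\mathbb{C}^r$ are linearly independent and $F_1,\dots,F_M:\mathbb{C}^r\to\mathbb{C}^r$ are linear maps with $w_{mn}=F_mv_n$ for all $m,n$, and suppose $v'_1,\dots,v'_N\in\mathbb{C}^K$ are linearly independent and $F'_1,\dots,F'_M:\mathbb{C}^K\to\mathbb{C}^K$ are linear maps with $w'_{mn}=F'_mv'_n$ for all $m,n$. Then there exist $K\times r$ matrices $V$ and $\tilde V$, with $V^\dagger V=I_r$ and $\tilde V$ of rank $r$, such that $V^\dagger F'_m\tilde V v=F_m v$ for every $m=1,\dots,M$ and every $v\in\operatorname{span}\{v_1,\dots,v_N\}$.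
   Context: $\{|e_m\rangle\}_{m=1}^M$ and $\{|f_n\rangle\}_{n=1}^N$ are fixed orthonormal bases of $\mathbb{C}^M$ and $\mathbb{C}^N$. The scalar product on $\mathbb{C}^K$ is $\langle u,v\rangle=\sum_l\overline{u^l}v^l$. A family of vectors $\{w_{mn}\}\subset\mathbb{C}^K$ is a Gram system for $\rho$ if $\rho_{ij,mn}:=\langle e_i\otimes f_j|\rho|e_m\otimes f_n\rangle=\langle w_{ij},w_{mn}\rangle$ for all $i,j,m,n$; the vectors defined in the claim are Gram systems for $\rho$. *)

theory Defs
  imports "Jordan_Normal_Form.Schur_Decomposition" "Jordan_Normal_Form.DL_Rank"
begin

definition cinner :: "complex vec \<Rightarrow> complex vec \<Rightarrow> complex" where
  "cinner u v = (\<Sum>i<dim_vec v. cnj (u $ i) * v $ i)"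

definition ketbra :: "complex vec \<Rightarrow> complex mat" where
  "ketbra x = mat (dim_vec x) (dim_vec x) (\<lambda>(i,j). x $ i * cnj (x $ j))"

text \<open>Tensor product of a in C^M and b in C^N, as a vector in C^(M*N),
  using the index identification (i,j) <-> i*N + j.\<close>
definition tensor_vec :: "complex vec \<Rightarrow> complex vec \<Rightarrow> complex vec" where
  "tensor_vec a b = vec (dim_vec a * dim_vec b)
     (\<lambda>k. a $ (k div dim_vec b) * b $ (k mod dim_vec b))"

definition orthonormal_fam :: "nat \<Rightarrow> nat \<Rightarrow> (nat \<Rightarrow> complex vec) \<Rightarrow> bool" where
  "orthonormal_fam d n x \<longleftrightarrow> (\<forall>i<n. x i \<in> carrier_vec d) \<and>
     (\<forall>i<n. \<forall>j<n. cinner (x i) (x j) = (if i = j then 1 else 0))"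

definition lin_indep_fam :: "nat \<Rightarrow> nat \<Rightarrow> (nat \<Rightarrow> complex vec) \<Rightarrow> bool" where
  "lin_indep_fam d n x \<longleftrightarrow> (\<forall>i<n. x i \<in> carrier_vec d) \<and>
     (\<forall>c. finsum_vec TYPE(complex) d (\<lambda>i. c i \<cdot>\<^sub>v x i) {..<n} = 0\<^sub>v d \<longrightarrow> (\<forall>i<n. c i = 0))"

definition span_fam :: "nat \<Rightarrow> nat \<Rightarrow> (nat \<Rightarrow> complex vec) \<Rightarrow> complex vec set" where
  "span_fam d n x = {finsum_vec TYPE(complex) d (\<lambda>i. c i \<cdot>\<^sub>v x i) {..<n} | c. True}"

definition sum_mat :: "nat \<Rightarrow> (nat \<Rightarrow> complex mat) \<Rightarrow> nat set \<Rightarrow> complex mat" where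
  "sum_mat n A I = mat n n (\<lambda>(i,j). \<Sum>l\<in>I. A l $$ (i,j))"

definition psd_mat :: "nat \<Rightarrow> complex mat \<Rightarrow> bool" where
  "psd_mat n A \<longleftrightarrow> A \<in> carrier_mat n n \<and> mat_adjoint A = A \<and>
     (\<forall>x \<in> carrier_vec n. Re (cinner x (A *\<^sub>v x)) \<ge> 0)"

end

theory Submission
  imports Defs
begin

lemma mult_unit_vec_col:
  fixes A :: "complex mat"
  assumes A: "A \<in> carrier_mat d n" and i: "i < n"
  shows "A *\<^sub>v unit_vec n i = col A i"
  proof (rule eq_vecI)
  fix k assume "k < dim_vec (col A i)"
  hence k: "k < d" using A by simp
  show "(A *\<^sub>v unit_vec n i) $ k = col A i $ k"
    using A i k by simp
qed (use A in simp)

lemma wide_kernel: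
  fixes A :: "complex mat"
  assumes A: "A \<in> carrier_mat d n" and dn: "d < n"
  shows "\<exists>z. z \<in> carrier_vec n \<and> z \<noteq> 0\<^sub>v n \<and> A *\<^sub>v z = 0\<^sub>v d"
proof -
  define B where "B = mat n n (\<lambda>(i,j). if i < d then A $$ (i,j) else 0)"
  have Bc: "B \<in> carrier_mat n n" by (simp add: B_def)
  have "B = mat\<^sub>r n n (\<lambda>i. if i = n-1 then 0\<^sub>v n else row B i)"
    by (rule eq_matI) (use dn in \<open>auto simp: B_def\<close>)
  also have "det \<dots> = 0" by (rule det_row_0) (use dn Bc in auto)
  finally have "det B = 0" .
  then obtain z where z: "z \<in> carrier_vec n" "z \<noteq> 0\<^sub>v n" "B *\<^sub>v z = 0\<^sub>v n"
    using det_0_iff_vec_prod_zero_field[OF Bc] by auto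
  have "A *\<^sub>v z = 0\<^sub>v d"
  proof (rule eq_vecI)
    fix i assume "i < dim_vec (0\<^sub>v d :: complex vec)"
    hence i: "i < d" by simp
    have "row A i = row B i" using A i dn by (auto simp: B_def)
    hence "(A *\<^sub>v z) $ i = (B *\<^sub>v z) $ i" using A i dn Bc by simp
    thus "(A *\<^sub>v z) $ i = 0\<^sub>v d $ i" using z(3) i dn by (metis index_zero_vec(1) less_trans)
  qed (use A in simp)
  thus ?thesis using z by blast
qed

lemma rank_of_inj:
  fixes A :: "complex mat"
  assumes A: "A \<in> carrier_mat d n" and inj: "\<forall>z\<in>carrier_vec n. A *\<^sub>v z = 0\<^sub>v d \<longrightarrow> z = 0\<^sub>v n"
  shows "vec_space.rank d A = n"
proof -
  interpret vs: vec_space "TYPE(complex)" d .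
  have dist: "distinct (cols A)"
  proof (rule ccontr)
    assume "\<not> distinct (cols A)"
    then obtain i j where ij: "i\<noteq>j" "cols A ! i = cols A ! j" "i<length (cols A)" "j<length(cols A)"
      using distinct_conv_nth by blast
    then have c: "col A i = col A j" "i<n" "j<n" using A by auto
    define z :: "complex vec" where "z = unit_vec n i - unit_vec n j"
    have zc: "z \<in> carrier_vec n" by (simp add: z_def)
    have "z $ i = 1" using ij c by (simp add: z_def)
    hence zn: "z \<noteq> 0\<^sub>v n" using c by auto
    have "A *\<^sub>v z = A *\<^sub>v unit_vec n i - A *\<^sub>v unit_vec n j"
      unfolding z_def by (rule mult_minus_distrib_mat_vec[OF A]) auto
    also have "\<dots> = 0\<^sub>v d" using mult_unit_vec_col[OF A c(2)] mult_unit_vec_col[OF A c(3)] c(1) A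
      by auto
    finally show False using inj zc zn by auto
  qed
  have "vs.lin_indpt (set (cols A))"
  proof (rule ccontr)
    assume "\<not> vs.lin_indpt (set (cols A))"
    then obtain v where "v \<in> carrier_vec n" "v \<noteq> 0\<^sub>v n" "A *\<^sub>v v = 0\<^sub>v d"
      using vs.lin_depE[OF A _ dist] by blast
    thus False using inj by auto
  qed
  thus ?thesis using vs.lin_indpt_full_rank[OF A dist] by simp
qed

lemma cnj_sum_sq_zero:
  fixes z :: "nat \<Rightarrow> complex"
  assumes "(\<Sum>i<d. cnj (z i) * z i) = 0" and "i < d"
  shows "z i = 0"
proof -
  have "(\<Sum>i<d. cnj (z i) * z i) = complex_of_real (\<Sum>i<d. (cmod (z i))^2)"
  proof -
    have t: "cnj w * w = complex_of_real ((cmod w)^2)" for w :: complex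
      by (metis complex_norm_square mult.commute)
    show ?thesis unfolding of_real_sum t by simp
  qed
  hence "complex_of_real (\<Sum>i<d. (cmod (z i))^2) = 0" using assms(1) by simp
  hence "(\<Sum>i<d. (cmod (z i))^2) = 0" by (simp only: of_real_eq_0_iff)
  hence "\<forall>i\<in>{..<d}. (cmod (z i))^2 = 0" by (subst sum_nonneg_eq_0_iff[symmetric]) auto
  thus ?thesis using assms(2) by simp
qed

lemma extend_step:
  fixes P :: "complex mat"
  assumes P: "P \<in> carrier_mat d p"
    and inj: "\<forall>z\<in>carrier_vec p. P *\<^sub>v z = 0\<^sub>v d \<longrightarrow> z = 0\<^sub>v p"
    and pd: "p < d"
  shows "\<exists>P'. P' \<in> carrier_mat d (Suc p) \<and> (\<forall>z\<in>carrier_vec (Suc p). P' *\<^sub>v z = 0\<^sub>v d \<longrightarrow> z = 0\<^sub>v (Suc p))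
     \<and> (\<forall>i<d. \<forall>j<p. P' $$ (i,j) = P $$ (i,j))"
proof -
  define Padj where "Padj = mat p d (\<lambda>(i,j). cnj (P $$ (j,i)))"
  obtain z where z: "z \<in> carrier_vec d" "z \<noteq> 0\<^sub>v d" "Padj *\<^sub>v z = 0\<^sub>v p"
    using wide_kernel[of Padj p d] pd by (auto simp: Padj_def)
  have orth: "(\<Sum>i<d. cnj (z$i) * P$$(i,j)) = 0" if j: "j < p" for j
  proof -
    have "(Padj *\<^sub>v z) $ j = 0" using z(3) j by simp
    hence "(\<Sum>i<d. cnj (P$$(i,j)) * z$i) = 0" using j z(1)
      by (simp add: Padj_def scalar_prod_def row_def lessThan_atLeast0)
    hence "cnj (\<Sum>i<d. cnj (P$$(i,j)) * z$i) = 0" by simp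
    thus ?thesis by (simp add: cnj_sum mult.commute)
  qed
  define P' where "P' = mat d (Suc p) (\<lambda>(i,j). if j < p then P $$ (i,j) else z $ i)"
  have P'c: "P' \<in> carrier_mat d (Suc p)" by (simp add: P'_def)
  have same: "\<forall>i<d. \<forall>j<p. P' $$ (i,j) = P $$ (i,j)" by (simp add: P'_def)
  have injP': "c = 0\<^sub>v (Suc p)" if c: "c \<in> carrier_vec (Suc p)" "P' *\<^sub>v c = 0\<^sub>v d" for c
  proof -
    have eq: "(\<Sum>j<p. P$$(i,j) * c$j) + z$i * c$p = 0" if i: "i < d" for i
    proof -
      have "(P' *\<^sub>v c) $ i = 0" using c(2) i by simp
      hence "(\<Sum>j<Suc p. P'$$(i,j) * c$j) = 0" using i c(1)
        by (simp add: P'_def scalar_prod_def row_def lessThan_atLeast0)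
      thus ?thesis using i by (simp add: P'_def)
    qed
    have "0 = (\<Sum>i<d. cnj (z$i) * ((\<Sum>j<p. P$$(i,j) * c$j) + z$i * c$p))"
      using eq by simp
    also have "\<dots> = (\<Sum>j<p. (\<Sum>i<d. cnj (z$i) * P$$(i,j)) * c$j) + c$p * (\<Sum>i<d. cnj (z$i) * z$i)"
      by (simp add: algebra_simps sum.distrib sum_distrib_left sum_distrib_right sum.swap[of _ "{..<d}"])
    also have "\<dots> = c$p * (\<Sum>i<d. cnj (z$i) * z$i)" using orth by simp
    finally have "c$p * (\<Sum>i<d. cnj (z$i) * z$i) = 0" by simp
    moreover have "(\<Sum>i<d. cnj (z$i) * z$i) \<noteq> 0"
    proof
      assume "(\<Sum>i<d. cnj (z$i) * z$i) = 0"
      hence "\<forall>i<d. z$i = 0" using cnj_sum_sq_zero[of "\<lambda>i. z$i"] by blast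
      hence "z = 0\<^sub>v d" using z(1) by (intro eq_vecI) auto
      thus False using z(2) by simp
    qed
    ultimately have cp: "c$p = 0" by simp
    define c' where "c' = vec p (\<lambda>j. c$j)"
    have "P *\<^sub>v c' = 0\<^sub>v d"
    proof (rule eq_vecI)
      fix i assume "i < dim_vec (0\<^sub>v d :: complex vec)"
      hence i: "i < d" by simp
      have "(P *\<^sub>v c') $ i = (\<Sum>j<p. P$$(i,j) * c$j)" using i P
        by (simp add: c'_def scalar_prod_def row_def lessThan_atLeast0)
      also have "\<dots> = 0" using eq[OF i] cp by simp
      finally show "(P *\<^sub>v c') $ i = 0\<^sub>v d $ i" using i by simp
    qed (use P in simp)
    hence "c' = 0\<^sub>v p" using inj by (simp add: c'_def)
    hence "\<forall>j<p. c$j = 0" by (metis c'_def index_vec index_zero_vec(1))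
    thus ?thesis using cp c(1) by (intro eq_vecI) (auto simp: less_Suc_eq)
  qed
  show ?thesis using P'c same injP' by blast
qed

lemma extend_inj:
  fixes P :: "complex mat"
  assumes P: "P \<in> carrier_mat d n"
    and inj: "\<forall>z\<in>carrier_vec n. P *\<^sub>v z = 0\<^sub>v d \<longrightarrow> z = 0\<^sub>v n"
    and np: "n \<le> p" and pd: "p \<le> d"
  shows "\<exists>P'. P' \<in> carrier_mat d p \<and> (\<forall>z\<in>carrier_vec p. P' *\<^sub>v z = 0\<^sub>v d \<longrightarrow> z = 0\<^sub>v p)
     \<and> (\<forall>i<d. \<forall>j<n. P' $$ (i,j) = P $$ (i,j))"
  using np pd
proof (induction p)
  case 0
  thus ?case using P inj by auto
next
  case (Suc p)
  show ?case
  proof (cases "n = Suc p")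
    case True thus ?thesis using P inj by auto
  next
    case False
    hence "n \<le> p" "p \<le> d" using Suc.prems by auto
    then obtain P0 where P0: "P0 \<in> carrier_mat d p" "\<forall>z\<in>carrier_vec p. P0 *\<^sub>v z = 0\<^sub>v d \<longrightarrow> z = 0\<^sub>v p"
      "\<forall>i<d. \<forall>j<n. P0 $$ (i,j) = P $$ (i,j)" using Suc.IH by blast
    obtain P1 where P1: "P1 \<in> carrier_mat d (Suc p)" "\<forall>z\<in>carrier_vec (Suc p). P1 *\<^sub>v z = 0\<^sub>v d \<longrightarrow> z = 0\<^sub>v (Suc p)"
      "\<forall>i<d. \<forall>j<p. P1 $$ (i,j) = P0 $$ (i,j)"
      using extend_step[OF P0(1,2)] Suc.prems by auto
    show ?thesis using P1 P0(3) \<open>n \<le> p\<close> by auto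
  qed
qed

lemma col_eq_entries:
  fixes A B :: "complex mat"
  assumes "A \<in> carrier_mat d n" "B \<in> carrier_mat d m" "j < n" "j < m"
    "\<forall>i<d. A $$ (i,j) = B $$ (i,j)"
  shows "col A j = col B j"
  using assms by (intro eq_vecI) auto

lemma Vt_exists:
  fixes P Q :: "complex mat"
  assumes P: "P \<in> carrier_mat r N"
    and injP: "\<forall>z\<in>carrier_vec N. P *\<^sub>v z = 0\<^sub>v r \<longrightarrow> z = 0\<^sub>v N"
    and Q: "Q \<in> carrier_mat K N"
    and injQ: "\<forall>z\<in>carrier_vec N. Q *\<^sub>v z = 0\<^sub>v K \<longrightarrow> z = 0\<^sub>v N"
    and rK: "r \<le> K"
  shows "\<exists>Vt. Vt \<in> carrier_mat K r \<and> (\<forall>z\<in>carrier_vec r. Vt *\<^sub>v z = 0\<^sub>v K \<longrightarrow> z = 0\<^sub>v r) \<and> Vt * P = Q"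
proof -
  have Nr: "N \<le> r"
  proof (rule ccontr)
    assume "\<not> N \<le> r"
    then obtain z where "z \<in> carrier_vec N" "z \<noteq> 0\<^sub>v N" "P *\<^sub>v z = 0\<^sub>v r"
      using wide_kernel[OF P] by auto
    thus False using injP by auto
  qed
  obtain X where X: "X \<in> carrier_mat r r" "\<forall>z\<in>carrier_vec r. X *\<^sub>v z = 0\<^sub>v r \<longrightarrow> z = 0\<^sub>v r"
    "\<forall>i<r. \<forall>j<N. X $$ (i,j) = P $$ (i,j)"
    using extend_inj[OF P injP Nr order_refl] by blast
  obtain Y where Y: "Y \<in> carrier_mat K r" "\<forall>z\<in>carrier_vec r. Y *\<^sub>v z = 0\<^sub>v K \<longrightarrow> z = 0\<^sub>v r"
    "\<forall>i<K. \<forall>j<N. Y $$ (i,j) = Q $$ (i,j)"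
    using extend_inj[OF Q injQ Nr rK] by blast
  have "det X \<noteq> 0" using det_0_iff_vec_prod_zero_field[OF X(1)] X(2) by auto
  from det_non_zero_imp_unit[OF X(1) this, of "()"]
  obtain Xi where Xi: "Xi \<in> carrier_mat r r" "Xi * X = 1\<^sub>m r" "X * Xi = 1\<^sub>m r"
    unfolding Units_def ring_mat_def by auto
  define Vt where "Vt = Y * Xi"
  have Vtc: "Vt \<in> carrier_mat K r" using Y(1) Xi(1) by (simp add: Vt_def)
  have "Vt * P = Q"
  proof (rule mat_col_eqI)
    fix j assume "j < dim_col Q"
    hence j: "j < N" using Q by simp
    have cX: "col P j = X *\<^sub>v unit_vec r j"
      using col_eq_entries[OF P X(1) j] X(3) j Nr mult_unit_vec_col[OF X(1)] by auto
    have "col (Vt * P) j = Vt *\<^sub>v col P j" by (rule col_mult2[OF Vtc P j])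
    also have "\<dots> = Y *\<^sub>v (Xi *\<^sub>v (X *\<^sub>v unit_vec r j))" using cX Y(1) Xi(1) X(1) by (simp add: Vt_def)
    also have "Xi *\<^sub>v (X *\<^sub>v unit_vec r j) = unit_vec r j"
      using Xi X(1) by (metis assoc_mult_mat_vec one_mult_mat_vec unit_vec_carrier)
    also have "Y *\<^sub>v unit_vec r j = col Y j" using mult_unit_vec_col[OF Y(1)] j Nr by simp
    also have "\<dots> = col Q j" using col_eq_entries[OF Y(1) Q] Y(3) j Nr by auto
    finally show "col (Vt * P) j = col Q j" .
  qed (use Vtc P Q in auto)
  moreover have "\<forall>z\<in>carrier_vec r. Vt *\<^sub>v z = 0\<^sub>v K \<longrightarrow> z = 0\<^sub>v r"
  proof (intro ballI impI)
    fix z :: "complex vec" assume z: "z \<in> carrier_vec r" "Vt *\<^sub>v z = 0\<^sub>v K"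
    have "Y *\<^sub>v (Xi *\<^sub>v z) = 0\<^sub>v K" using z Y(1) Xi(1) by (simp add: Vt_def)
    hence "Xi *\<^sub>v z = 0\<^sub>v r" using Y(2) Xi(1) z(1) by auto
    hence "X *\<^sub>v (Xi *\<^sub>v z) = 0\<^sub>v r" using X(1)
      by (intro eq_vecI) (auto simp: scalar_prod_def)
    moreover have "X *\<^sub>v (Xi *\<^sub>v z) = z"
      using Xi X(1) z(1) by (metis assoc_mult_mat_vec one_mult_mat_vec)
    ultimately show "z = 0\<^sub>v r" by simp
  qed
  ultimately show ?thesis using Vtc by blast
qed

lemma adj_index:
  fixes A :: "complex mat"
  assumes "i < dim_col A" "j < dim_row A"
  shows "mat_adjoint A $$ (i,j) = cnj (A $$ (j,i))"
  using assms unfolding mat_adjoint_def by (simp add: mat_of_rows_def)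

lemma adj_carrier:
  fixes A :: "complex mat"
  shows "A \<in> carrier_mat n m \<Longrightarrow> mat_adjoint A \<in> carrier_mat m n"
  unfolding mat_adjoint_def by auto

lemma cinner_sum: "dim_vec v = D \<Longrightarrow> cinner u v = (\<Sum>a<D. cnj (u $ a) * v $ a)"
  by (simp add: cinner_def)

lemma cnj_cinner:
  assumes "dim_vec u = dim_vec v"
  shows "cnj (cinner u v) = cinner v u"
  using assms unfolding cinner_def cnj_sum by (intro sum.cong) (auto simp: mult.commute)

lemma quad_form:
  fixes Xi :: "nat \<Rightarrow> complex vec"
  assumes Xc: "\<forall>l<n. Xi l \<in> carrier_vec D" and x: "x \<in> carrier_vec D" and y: "y \<in> carrier_vec D"
  shows "cinner x (sum_mat D (\<lambda>l. ketbra (Xi l)) {..<n} *\<^sub>v y) = (\<Sum>l<n. cinner x (Xi l) * cinner (Xi l) y)"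
proof -
  have ent: "sum_mat D (\<lambda>l. ketbra (Xi l)) {..<n} $$ (a,b) = (\<Sum>l<n. Xi l $ a * cnj (Xi l $ b))"
    if "a < D" "b < D" for a b
    using that Xc by (auto simp: sum_mat_def ketbra_def intro!: sum.cong)
  define Mx where "Mx = sum_mat D (\<lambda>l. ketbra (Xi l)) {..<n}"
  have Mc: "Mx \<in> carrier_mat D D" by (simp add: Mx_def sum_mat_def)
  have "cinner x (Mx *\<^sub>v y) = (\<Sum>a<D. cnj (x$a) * (\<Sum>b<D. Mx $$ (a,b) * y $ b))"
    using Mc y by (simp add: cinner_def scalar_prod_def lessThan_atLeast0)
  also have "\<dots> = (\<Sum>a<D. cnj (x$a) * (\<Sum>b<D. (\<Sum>l<n. Xi l $ a * cnj (Xi l $ b)) * y $ b))"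
    using ent unfolding Mx_def by (intro sum.cong refl arg_cong2[where f="(*)"]) auto
  also have "\<dots> = (\<Sum>l<n. (\<Sum>a<D. cnj (x$a) * Xi l $ a) * (\<Sum>b<D. cnj (Xi l $ b) * y $ b))"
  proof -
    have "(\<Sum>a<D. cnj (x$a) * (\<Sum>b<D. (\<Sum>l<n. Xi l $ a * cnj (Xi l $ b)) * y $ b))
       = (\<Sum>a<D. \<Sum>b<D. \<Sum>l<n. cnj (x$a) * Xi l $ a * (cnj (Xi l $ b) * y $ b))"
    proof (intro sum.cong refl)
      fix a assume "a \<in> {..<D}"
      show "cnj (x$a) * (\<Sum>b<D. (\<Sum>l<n. Xi l $ a * cnj (Xi l $ b)) * y $ b)
         = (\<Sum>b<D. \<Sum>l<n. cnj (x$a) * Xi l $ a * (cnj (Xi l $ b) * y $ b))"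
        unfolding sum_distrib_left
      proof (intro sum.cong refl)
        fix b assume "b \<in> {..<D}"
        show "cnj (x$a) * ((\<Sum>l<n. Xi l $ a * cnj (Xi l $ b)) * y $ b)
           = (\<Sum>l<n. cnj (x$a) * Xi l $ a * (cnj (Xi l $ b) * y $ b))"
          unfolding sum_distrib_right sum_distrib_left by (intro sum.cong refl) (simp add: mult_ac)
      qed
    qed
    also have "\<dots> = (\<Sum>a<D. \<Sum>l<n. \<Sum>b<D. cnj (x$a) * Xi l $ a * (cnj (Xi l $ b) * y $ b))"
      by (rule sum.cong[OF refl], rule sum.swap)
    also have "\<dots> = (\<Sum>l<n. \<Sum>a<D. \<Sum>b<D. cnj (x$a) * Xi l $ a * (cnj (Xi l $ b) * y $ b))"
      by (rule sum.swap)
    also have "\<dots> = (\<Sum>l<n. (\<Sum>a<D. cnj (x$a) * Xi l $ a) * (\<Sum>b<D. cnj (Xi l $ b) * y $ b))"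
      by (simp add: sum_product)
    finally show ?thesis .
  qed
  also have "\<dots> = (\<Sum>l<n. cinner x (Xi l) * cinner (Xi l) y)"
    using Xc y by (intro sum.cong) (auto simp: cinner_def)
  finally show ?thesis unfolding Mx_def .
qed

lemma W_exists:
  fixes Psi Phi :: "nat \<Rightarrow> complex vec" and lam :: "nat \<Rightarrow> real"
  assumes Psic: "\<forall>l<r. Psi l \<in> carrier_vec D" and Phic: "\<forall>k<K. Phi k \<in> carrier_vec D"
    and orth: "\<forall>l<r. \<forall>j<r. cinner (Psi l) (Psi j) = (if l = j then complex_of_real (lam l) else 0)"
    and lam: "\<forall>l<r. lam l > 0"
    and G: "sum_mat D (\<lambda>l. ketbra (Psi l)) {..<r} = sum_mat D (\<lambda>k. ketbra (Phi k)) {..<K}"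
  shows "\<exists>W. W \<in> carrier_mat K r \<and> mat_adjoint W * W = 1\<^sub>m r \<and>
     (\<forall>x\<in>carrier_vec D. W *\<^sub>v vec r (\<lambda>l. cinner (Psi l) x) = vec K (\<lambda>k. cinner (Phi k) x))"
proof -
  have G': "(\<Sum>l<r. cinner x (Psi l) * cinner (Psi l) y) = (\<Sum>k<K. cinner x (Phi k) * cinner (Phi k) y)"
    if "x \<in> carrier_vec D" "y \<in> carrier_vec D" for x y
    using quad_form[OF Psic that] quad_form[OF Phic that] G by simp
  define W where "W = mat K r (\<lambda>(k,l). cinner (Phi k) (Psi l) / complex_of_real (lam l))"
  have Wc: "W \<in> carrier_mat K r" by (simp add: W_def)
  have adj: "mat_adjoint W * W = 1\<^sub>m r"
  proof (rule eq_matI)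
    fix l l' assume "l < dim_row (1\<^sub>m r :: complex mat)" "l' < dim_col (1\<^sub>m r :: complex mat)"
    hence l: "l < r" and l': "l' < r" by auto
    have "(mat_adjoint W * W) $$ (l,l') = (\<Sum>k<K. cnj (W $$ (k,l)) * W $$ (k,l'))"
      using l l' Wc adj_carrier[OF Wc]
      by (simp add: scalar_prod_def row_def col_def lessThan_atLeast0 adj_index)
    also have "\<dots> = (\<Sum>k<K. cinner (Psi l) (Phi k) * cinner (Phi k) (Psi l')) / (complex_of_real (lam l) * complex_of_real (lam l'))"
      using l l' Psic Phic
      by (auto simp: W_def sum_divide_distrib cnj_cinner[symmetric] intro!: sum.cong)
    also have "(\<Sum>k<K. cinner (Psi l) (Phi k) * cinner (Phi k) (Psi l')) = (\<Sum>j<r. cinner (Psi l) (Psi j) * cinner (Psi j) (Psi l'))"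
      using G' l l' Psic by simp
    also have "\<dots> = (\<Sum>j<r. (if l = j then complex_of_real (lam l) else 0) * (if j = l' then complex_of_real (lam j) else 0))"
      using orth l l' by (intro sum.cong) auto
    also have "\<dots> = (if l = l' then complex_of_real (lam l) * complex_of_real (lam l) else 0)"
    proof -
      have "(\<Sum>j<r. (if l = j then complex_of_real (lam l) else 0) * (if j = l' then complex_of_real (lam j) else 0))
         = (\<Sum>j<r. if j = l then (if l = l' then complex_of_real (lam l) * complex_of_real (lam l) else 0) else 0)"
        by (intro sum.cong) auto
      also have "\<dots> = (if l = l' then complex_of_real (lam l) * complex_of_real (lam l) else 0)"
        using l by simp
      finally show ?thesis .
    qed
    finally show "(mat_adjoint W * W) $$ (l,l') = 1\<^sub>m r $$ (l,l')"
      using l l' lam by auto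
  qed (use Wc adj_carrier[OF Wc] in auto)
  have act: "W *\<^sub>v vec r (\<lambda>l. cinner (Psi l) x) = vec K (\<lambda>k. cinner (Phi k) x)" if x: "x \<in> carrier_vec D" for x
  proof -
    define c where "c = (\<lambda>l. cinner (Psi l) x / complex_of_real (lam l))"
    define z where "z = vec D (\<lambda>a. x $ a - (\<Sum>l<r. c l * Psi l $ a))"
    have zc: "z \<in> carrier_vec D" by (simp add: z_def)
    have lin: "cinner y z = cinner y x - (\<Sum>l<r. c l * cinner y (Psi l))" if "y \<in> carrier_vec D" for y
    proof -
      have "cinner y z = (\<Sum>a<D. cnj (y$a) * x$a) - (\<Sum>a<D. \<Sum>l<r. c l * (cnj (y$a) * Psi l $ a))"
        by (simp add: cinner_def z_def algebra_simps sum_subtractf sum_distrib_left)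
      also have "(\<Sum>a<D. \<Sum>l<r. c l * (cnj (y$a) * Psi l $ a)) = (\<Sum>l<r. c l * (\<Sum>a<D. cnj (y$a) * Psi l $ a))"
        by (subst sum.swap) (simp add: sum_distrib_left)
      also have "(\<Sum>l<r. c l * (\<Sum>a<D. cnj (y$a) * Psi l $ a)) = (\<Sum>l<r. c l * cinner y (Psi l))"
        using Psic by (intro sum.cong) (auto simp: cinner_def)
      also have "(\<Sum>a<D. cnj (y$a) * x$a) = cinner y x" using x by (simp add: cinner_def)
      finally show ?thesis .
    qed
    have pz: "cinner (Psi j) z = 0" if j: "j < r" for j
    proof -
      have "(\<Sum>l<r. c l * cinner (Psi j) (Psi l)) = (\<Sum>l<r. c l * (if j = l then complex_of_real (lam j) else 0))"
        using orth j by (intro sum.cong) auto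
      also have "\<dots> = (\<Sum>l<r. if l = j then c j * complex_of_real (lam j) else 0)"
        by (intro sum.cong) auto
      also have "\<dots> = c j * complex_of_real (lam j)" using j by simp
      also have "\<dots> = cinner (Psi j) x"
      proof -
        have "lam j \<noteq> 0" using lam j by fastforce
        thus ?thesis by (simp add: c_def)
      qed
      finally show ?thesis using lin Psic j by simp
    qed
    have "(\<Sum>k<K. cnj (cinner (Phi k) z) * cinner (Phi k) z) = (\<Sum>k<K. cinner z (Phi k) * cinner (Phi k) z)"
      using Phic zc by (intro sum.cong) (auto simp: cnj_cinner)
    also have "\<dots> = (\<Sum>l<r. cinner z (Psi l) * cinner (Psi l) z)" using G' zc by simp
    also have "\<dots> = 0" using pz by simp
    finally have S0: "(\<Sum>k<K. cnj (cinner (Phi k) z) * cinner (Phi k) z) = 0" .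
    have Z: "cinner (Phi k) z = 0" if "k<K" for k
      using cnj_sum_sq_zero[of "\<lambda>k. cinner (Phi k) z" K k] S0 that by simp
    show ?thesis
    proof (rule eq_vecI)
      fix k assume "k < dim_vec (vec K (\<lambda>k. cinner (Phi k) x))"
      hence k: "k < K" by simp
      have "(W *\<^sub>v vec r (\<lambda>l. cinner (Psi l) x)) $ k = (\<Sum>l<r. W $$ (k,l) * cinner (Psi l) x)"
        using k Wc by (simp add: scalar_prod_def lessThan_atLeast0)
      also have "\<dots> = (\<Sum>l<r. c l * cinner (Phi k) (Psi l))"
        using k by (intro sum.cong refl) (simp add: W_def c_def divide_inverse mult_ac)
      also have "\<dots> = cinner (Phi k) x" using lin[of "Phi k"] Phic k Z[OF k] by simp
      finally show "(W *\<^sub>v vec r (\<lambda>l. cinner (Psi l) x)) $ k = vec K (\<lambda>k. cinner (Phi k) x) $ k" using k by simp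
    qed (simp add: W_def)
  qed
  show ?thesis using Wc adj act by blast
qed

lemma finsum_as_mat:
  assumes x: "\<forall>i<n. x i \<in> carrier_vec d"
  shows "finsum_vec TYPE(complex) d (\<lambda>i. c i \<cdot>\<^sub>v x i) {..<n} = mat d n (\<lambda>(i,j). x j $ i) *\<^sub>v vec n c"
proof (rule eq_vecI)
  have cl: "(\<lambda>i. c i \<cdot>\<^sub>v x i) \<in> {..<n} \<rightarrow> carrier_vec d" using x by auto
  show "dim_vec (finsum_vec TYPE(complex) d (\<lambda>i. c i \<cdot>\<^sub>v x i) {..<n}) = dim_vec (mat d n (\<lambda>(i,j). x j $ i) *\<^sub>v vec n c)"
    using finsum_vec_closed[OF cl] by simp
  fix i assume "i < dim_vec (mat d n (\<lambda>(i,j). x j $ i) *\<^sub>v vec n c)"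
  hence i: "i < d" by simp
  show "finsum_vec TYPE(complex) d (\<lambda>i. c i \<cdot>\<^sub>v x i) {..<n} $ i = (mat d n (\<lambda>(i,j). x j $ i) *\<^sub>v vec n c) $ i"
    using index_finsum_vec[OF _ i cl] i x
    by (auto simp: scalar_prod_def row_def lessThan_atLeast0 mult.commute intro!: sum.cong)
qed


lemma cinner_smult:
  assumes "dim_vec u = dim_vec v"
  shows "cinner (a \<cdot>\<^sub>v u) (b \<cdot>\<^sub>v v) = cnj a * b * cinner u v"
  using assms unfolding cinner_def sum_distrib_left by (intro sum.cong) (auto simp: mult_ac)

lemma final_combine:
  fixes V Vt P Q Fm F'm :: "complex mat"
  assumes V: "V \<in> carrier_mat K r" and adjVV: "mat_adjoint V * V = 1\<^sub>m r"
    and Vt: "Vt \<in> carrier_mat K r" and P: "P \<in> carrier_mat r N" and Q: "Q \<in> carrier_mat K N"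
    and VtP: "Vt * P = Q" and Fm: "Fm \<in> carrier_mat r r" and F'm: "F'm \<in> carrier_mat K K"
    and cols: "\<forall>j<N. F'm *\<^sub>v col Q j = V *\<^sub>v (Fm *\<^sub>v col P j)"
    and c: "c \<in> carrier_vec N"
  shows "mat_adjoint V *\<^sub>v (F'm *\<^sub>v (Vt *\<^sub>v (P *\<^sub>v c))) = Fm *\<^sub>v (P *\<^sub>v c)"
proof -
  have aV: "mat_adjoint V \<in> carrier_mat r K" using adj_carrier[OF V] .
  have FQ: "F'm * Q = V * (Fm * P)"
  proof (rule mat_col_eqI)
    fix j assume "j < dim_col (V * (Fm * P))"
    hence j: "j < N" using P by simp
    have "col (F'm * Q) j = F'm *\<^sub>v col Q j" by (rule col_mult2[OF F'm Q j])
    also have "\<dots> = V *\<^sub>v (Fm *\<^sub>v col P j)" using cols j by simp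
    also have "\<dots> = col (V * (Fm * P)) j"
      using col_mult2[OF V mult_carrier_mat[OF Fm P] j] col_mult2[OF Fm P j] by simp
    finally show "col (F'm * Q) j = col (V * (Fm * P)) j" .
  qed (use F'm Q V Fm P in auto)
  have "Vt *\<^sub>v (P *\<^sub>v c) = Q *\<^sub>v c" using Vt P c VtP by (metis assoc_mult_mat_vec)
  hence "F'm *\<^sub>v (Vt *\<^sub>v (P *\<^sub>v c)) = (F'm * Q) *\<^sub>v c" using F'm Q c by simp
  also have "\<dots> = V *\<^sub>v ((Fm * P) *\<^sub>v c)" unfolding FQ using V Fm P c
    by (meson assoc_mult_mat_vec mult_carrier_mat)
  finally have "mat_adjoint V *\<^sub>v (F'm *\<^sub>v (Vt *\<^sub>v (P *\<^sub>v c))) = (mat_adjoint V * V) *\<^sub>v ((Fm * P) *\<^sub>v c)"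
    using aV V Fm P c by (metis assoc_mult_mat_vec mult_carrier_mat mult_mat_vec_carrier)
  also have "\<dots> = (Fm * P) *\<^sub>v c" unfolding adjVV using Fm P c by simp
  also have "\<dots> = Fm *\<^sub>v (P *\<^sub>v c)" using Fm P c by simp
  finally show ?thesis .
qed

theorem theorem1:
  fixes M N r K :: nat
    and e f :: "nat \<Rightarrow> complex vec"
    and \<rho> :: "complex mat"
    and lam :: "nat \<Rightarrow> real"
    and \<psi> \<Phi> :: "nat \<Rightarrow> complex vec"
    and v :: "nat \<Rightarrow> complex vec" and F :: "nat \<Rightarrow> complex mat"
    and v' :: "nat \<Rightarrow> complex vec" and F' :: "nat \<Rightarrow> complex mat"
  defines "\<Psi> \<equiv> (\<lambda>l. complex_of_real (sqrt (lam l)) \<cdot>\<^sub>v \<psi> l)"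
  defines "w \<equiv> (\<lambda>m n. vec r (\<lambda>l. cinner (\<Psi> l) (tensor_vec (e m) (f n))))"
  defines "w' \<equiv> (\<lambda>m n. vec K (\<lambda>k. cinner (\<Phi> k) (tensor_vec (e m) (f n))))"
  assumes e_onb: "orthonormal_fam M M e"
    and f_onb: "orthonormal_fam N N f"
    and \<rho>_carrier: "\<rho> \<in> carrier_mat (M * N) (M * N)"
    and \<rho>_psd: "psd_mat (M * N) \<rho>"
    and \<rho>_rank: "vec_space.rank (M * N) \<rho> = r"
    and lam_pos: "\<forall>l<r. lam l > 0"
    and \<psi>_on: "orthonormal_fam (M * N) r \<psi>"
    and \<psi>_eig: "\<forall>l<r. \<rho> *\<^sub>v \<psi> l = complex_of_real (lam l) \<cdot>\<^sub>v \<psi> l"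
    and \<rho>_spec: "\<rho> = sum_mat (M * N) (\<lambda>l. ketbra (\<Psi> l)) {..<r}"
    and K_ge: "K \<ge> r"
    and \<Phi>_carrier: "\<forall>k<K. \<Phi> k \<in> carrier_vec (M * N)"
    and \<rho>_decomp: "\<rho> = sum_mat (M * N) (\<lambda>k. ketbra (\<Phi> k)) {..<K}"
    and v_indep: "lin_indep_fam r N v"
    and F_carrier: "\<forall>m<M. F m \<in> carrier_mat r r"
    and w_fact: "\<forall>m<M. \<forall>n<N. w m n = F m *\<^sub>v v n"
    and v'_indep: "lin_indep_fam K N v'"
    and F'_carrier: "\<forall>m<M. F' m \<in> carrier_mat K K"
    and w'_fact: "\<forall>m<M. \<forall>n<N. w' m n = F' m *\<^sub>v v' n"
  shows "\<exists>V Vt. V \<in> carrier_mat K r \<and> Vt \<in> carrier_mat K r \<and>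
           mat_adjoint V * V = 1\<^sub>m r \<and> vec_space.rank K Vt = r \<and>
           (\<forall>m<M. \<forall>x \<in> span_fam r N v.
              mat_adjoint V *\<^sub>v (F' m *\<^sub>v (Vt *\<^sub>v x)) = F m *\<^sub>v x)"
proof -
  let ?D = "M * N"
  have ec: "e m \<in> carrier_vec M" if "m < M" for m using e_onb that unfolding orthonormal_fam_def by blast
  have fc: "f n \<in> carrier_vec N" if "n < N" for n using f_onb that unfolding orthonormal_fam_def by blast
  have xc: "tensor_vec (e m) (f n) \<in> carrier_vec ?D" if "m < M" "n < N" for m n
    using carrier_vecD[OF ec[OF that(1)]] carrier_vecD[OF fc[OF that(2)]] unfolding tensor_vec_def by simp
  have psic: "\<psi> l \<in> carrier_vec ?D" if "l < r" for l using \<psi>_on that unfolding orthonormal_fam_def by blast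
  have Psic: "\<forall>l<r. \<Psi> l \<in> carrier_vec ?D" using psic by (simp add: \<Psi>_def)
  have orth: "\<forall>l<r. \<forall>j<r. cinner (\<Psi> l) (\<Psi> j) = (if l = j then complex_of_real (lam l) else 0)"
  proof (intro allI impI)
    fix l j assume l: "l < r" and j: "j < r"
    have "cinner (\<Psi> l) (\<Psi> j) = cnj (complex_of_real (sqrt (lam l))) * complex_of_real (sqrt (lam j)) * cinner (\<psi> l) (\<psi> j)"
      unfolding \<Psi>_def using psic[OF l] psic[OF j] by (intro cinner_smult) simp
    also have "cinner (\<psi> l) (\<psi> j) = (if l = j then 1 else 0)"
      using \<psi>_on l j unfolding orthonormal_fam_def by blast
    finally show "cinner (\<Psi> l) (\<Psi> j) = (if l = j then complex_of_real (lam l) else 0)"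
      using lam_pos l by (auto simp flip: of_real_mult)
  qed
  have G: "sum_mat ?D (\<lambda>l. ketbra (\<Psi> l)) {..<r} = sum_mat ?D (\<lambda>k. ketbra (\<Phi> k)) {..<K}"
    using \<rho>_spec \<rho>_decomp by simp
  obtain W where W: "W \<in> carrier_mat K r" "mat_adjoint W * W = 1\<^sub>m r"
    "\<forall>x\<in>carrier_vec ?D. W *\<^sub>v vec r (\<lambda>l. cinner (\<Psi> l) x) = vec K (\<lambda>k. cinner (\<Phi> k) x)"
    using W_exists[OF Psic \<Phi>_carrier orth lam_pos G] by blast
  have Ww: "W *\<^sub>v w m n = w' m n" if "m < M" "n < N" for m n
    using W(3) xc[OF that] unfolding w_def w'_def by blast
  have vc: "v n \<in> carrier_vec r" if "n < N" for n using v_indep that unfolding lin_indep_fam_def by blast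
  have v'c: "v' n \<in> carrier_vec K" if "n < N" for n using v'_indep that unfolding lin_indep_fam_def by blast
  define P where "P = mat r N (\<lambda>(i,j). v j $ i)"
  define Q where "Q = mat K N (\<lambda>(i,j). v' j $ i)"
  have Pc: "P \<in> carrier_mat r N" and Qc: "Q \<in> carrier_mat K N" by (auto simp: P_def Q_def)
  have colP: "col P j = v j" if "j < N" for j using vc[OF that] that by (intro eq_vecI) (auto simp: P_def)
  have colQ: "col Q j = v' j" if "j < N" for j using v'c[OF that] that by (intro eq_vecI) (auto simp: Q_def)
  have injP: "\<forall>z\<in>carrier_vec N. P *\<^sub>v z = 0\<^sub>v r \<longrightarrow> z = 0\<^sub>v N"
  proof (intro ballI impI)
    fix z :: "complex vec" assume z: "z \<in> carrier_vec N" "P *\<^sub>v z = 0\<^sub>v r"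
    have "vec N (\<lambda>i. z $ i) = z" using z(1) by auto
    hence "finsum_vec TYPE(complex) r (\<lambda>i. (z $ i) \<cdot>\<^sub>v v i) {..<N} = 0\<^sub>v r"
      using finsum_as_mat[of N v r "\<lambda>i. z $ i"] vc z(2) unfolding P_def by auto
    hence "\<forall>i<N. z $ i = 0" using v_indep unfolding lin_indep_fam_def by blast
    thus "z = 0\<^sub>v N" using z(1) by (intro eq_vecI) auto
  qed
  have injQ: "\<forall>z\<in>carrier_vec N. Q *\<^sub>v z = 0\<^sub>v K \<longrightarrow> z = 0\<^sub>v N"
  proof (intro ballI impI)
    fix z :: "complex vec" assume z: "z \<in> carrier_vec N" "Q *\<^sub>v z = 0\<^sub>v K"
    have "vec N (\<lambda>i. z $ i) = z" using z(1) by auto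
    hence "finsum_vec TYPE(complex) K (\<lambda>i. (z $ i) \<cdot>\<^sub>v v' i) {..<N} = 0\<^sub>v K"
      using finsum_as_mat[of N v' K "\<lambda>i. z $ i"] v'c z(2) unfolding Q_def by auto
    hence "\<forall>i<N. z $ i = 0" using v'_indep unfolding lin_indep_fam_def by blast
    thus "z = 0\<^sub>v N" using z(1) by (intro eq_vecI) auto
  qed
  obtain Vt where Vt: "Vt \<in> carrier_mat K r" "\<forall>z\<in>carrier_vec r. Vt *\<^sub>v z = 0\<^sub>v K \<longrightarrow> z = 0\<^sub>v r" "Vt * P = Q"
    using Vt_exists[OF Pc injP Qc injQ K_ge] by blast
  have rk: "vec_space.rank K Vt = r" using rank_of_inj[OF Vt(1,2)] .
  have main: "\<forall>m<M. \<forall>x \<in> span_fam r N v.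
              mat_adjoint W *\<^sub>v (F' m *\<^sub>v (Vt *\<^sub>v x)) = F m *\<^sub>v x"
  proof (intro allI impI ballI)
    fix m x assume m: "m < M" and x: "x \<in> span_fam r N v"
    then obtain c where xc': "x = finsum_vec TYPE(complex) r (\<lambda>i. c i \<cdot>\<^sub>v v i) {..<N}"
      unfolding span_fam_def by blast
    hence xP: "x = P *\<^sub>v vec N c" using finsum_as_mat[of N v r c] vc unfolding P_def by auto
    have cols: "\<forall>j<N. F' m *\<^sub>v col Q j = W *\<^sub>v (F m *\<^sub>v col P j)"
      using colP colQ w_fact w'_fact Ww m by auto
    show "mat_adjoint W *\<^sub>v (F' m *\<^sub>v (Vt *\<^sub>v x)) = F m *\<^sub>v x"
      unfolding xP
      by (rule final_combine[OF W(1,2) Vt(1) Pc Qc Vt(3)]) (use F_carrier F'_carrier m cols in auto)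
  qed
  show ?thesis using W(1,2) Vt(1) rk main by blast
qed

end
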